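(* Let $G$ be a finite group and $H$ a finite abelian group. Then $A_{G\times H}(t)=A_G(|H|t)$ and $B_{G\times H}(t)=B_G(|H|t)$.
   Context: For a finite group $G$ and $n\ge 0$, $G$ acts on $G^n$ by simultaneous conjugation. Let $G^{(n)}\subseteq G^n$ be the set of $n$-tuples of pairwise commuting elements. Let $\alpha_{G,n}$ (resp. $\beta_{G,n}$) be the number of $G$-orbits on $G^n$ (resp. on $G^{(n)}$), and set $A_G(t)=\sum_{n\ge0}\alpha_{G,n}t^n$, $B_G(t)=\sum_{n\ge0}\beta_{G,n}t^n$. *)

theory Defs
  imports "HOL-Algebra.Group" "HOL-Computational_Algebra.Formal_Power_Series"
begin

definition tuples :: "('a, 'b) monoid_scheme \<Rightarrow> nat \<Rightarrow> (nat \<Rightarrow> 'a) set" where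
  "tuples G n = {0..<n} \<rightarrow>\<^sub>E carrier G"

definition commuting_tuples :: "('a, 'b) monoid_scheme \<Rightarrow> nat \<Rightarrow> (nat \<Rightarrow> 'a) set" where
  "commuting_tuples G n = {x \<in> tuples G n. \<forall>i<n. \<forall>j<n. x i \<otimes>\<^bsub>G\<^esub> x j = x j \<otimes>\<^bsub>G\<^esub> x i}"

definition conj_orbit :: "('a, 'b) monoid_scheme \<Rightarrow> nat \<Rightarrow> (nat \<Rightarrow> 'a) \<Rightarrow> (nat \<Rightarrow> 'a) set" where
  "conj_orbit G n x = {y \<in> tuples G n. \<exists>g\<in>carrier G. \<forall>i<n. y i = g \<otimes>\<^bsub>G\<^esub> x i \<otimes>\<^bsub>G\<^esub> inv\<^bsub>G\<^esub> g}"

definition alpha :: "('a, 'b) monoid_scheme \<Rightarrow> nat \<Rightarrow> nat" where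
  "alpha G n = card (conj_orbit G n ` tuples G n)"

definition beta :: "('a, 'b) monoid_scheme \<Rightarrow> nat \<Rightarrow> nat" where
  "beta G n = card (conj_orbit G n ` commuting_tuples G n)"

definition A_series :: "('a, 'b) monoid_scheme \<Rightarrow> nat fps" where
  "A_series G = Abs_fps (alpha G)"

definition B_series :: "('a, 'b) monoid_scheme \<Rightarrow> nat fps" where
  "B_series G = Abs_fps (beta G)"

end

theory Submission imports Defs begin
unbundle fps_syntax

definition pr :: "nat \<Rightarrow> (nat \<Rightarrow> 'a) \<Rightarrow> (nat \<Rightarrow> 'c) \<Rightarrow> nat \<Rightarrow> 'a \<times> 'c" where
  "pr n x h = (\<lambda>i\<in>{0..<n}. (x i, h i))"

lemma pr_in_tuples:
  "x \<in> tuples G n \<Longrightarrow> h \<in> tuples H n \<Longrightarrow> pr n x h \<in> tuples (G \<times>\<times> H) n"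
  unfolding pr_def tuples_def by auto

lemma pr_inj:
  assumes "x \<in> tuples G n" "h \<in> tuples H n" "x' \<in> tuples G n" "h' \<in> tuples H n"
    and "pr n x h = pr n x' h'"
  shows "x = x' \<and> h = h'"
proof -
  have "x i = x' i \<and> h i = h' i" if "i < n" for i
  proof -
    have "pr n x h i = pr n x' h' i" using assms(5) by simp
    then show ?thesis using that unfolding pr_def by simp
  qed
  note e = this
  have "x = x'" using assms(1,3) unfolding tuples_def
    by (rule PiE_ext) (use e in auto)
  moreover have "h = h'" using assms(2,4) unfolding tuples_def
    by (rule PiE_ext) (use e in auto)
  ultimately show ?thesis by simp
qed

lemma tuples_split:
  "tuples (G \<times>\<times> H) n = {pr n x h | x h. x \<in> tuples G n \<and> h \<in> tuples H n}"
proof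
  show "{pr n x h | x h. x \<in> tuples G n \<and> h \<in> tuples H n} \<subseteq> tuples (G \<times>\<times> H) n"
    using pr_in_tuples by blast
next
  show "tuples (G \<times>\<times> H) n \<subseteq> {pr n x h | x h. x \<in> tuples G n \<and> h \<in> tuples H n}"
  proof
    fix p assume p: "p \<in> tuples (G \<times>\<times> H) n"
    define x where "x = (\<lambda>i\<in>{0..<n}. fst (p i))"
    define h where "h = (\<lambda>i\<in>{0..<n}. snd (p i))"
    have "x \<in> tuples G n" "h \<in> tuples H n" using p unfolding x_def h_def tuples_def
      by (auto simp: PiE_iff mem_Times_iff)
    moreover have "p = pr n x h" using p unfolding x_def h_def tuples_def pr_def
      by (auto simp: PiE_def extensional_def)
    ultimately show "p \<in> {pr n x h | x h. x \<in> tuples G n \<and> h \<in> tuples H n}" by blast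
  qed
qed

lemma commuting_split:
  assumes "comm_group H"
  shows "commuting_tuples (G \<times>\<times> H) n = {pr n x h | x h. x \<in> commuting_tuples G n \<and> h \<in> tuples H n}"
proof -
  interpret H: comm_group H by fact
  have "pr n x h \<in> commuting_tuples (G \<times>\<times> H) n \<longleftrightarrow> x \<in> commuting_tuples G n"
    if "x \<in> tuples G n" "h \<in> tuples H n" for x h
  proof -
    have hc: "h i \<otimes>\<^bsub>H\<^esub> h j = h j \<otimes>\<^bsub>H\<^esub> h i" if "i < n" "j < n" for i j
      using \<open>h \<in> tuples H n\<close> that H.m_comm unfolding tuples_def by (meson PiE_mem atLeastLessThan_iff le0)
    show ?thesis using that hc pr_in_tuples[OF that]
      unfolding commuting_tuples_def pr_def by auto
  qed
  note eq = this
  show ?thesis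
  proof
    show "commuting_tuples (G \<times>\<times> H) n \<subseteq> {pr n x h | x h. x \<in> commuting_tuples G n \<and> h \<in> tuples H n}"
    proof
      fix p assume p: "p \<in> commuting_tuples (G \<times>\<times> H) n"
      then have "p \<in> tuples (G \<times>\<times> H) n" unfolding commuting_tuples_def by blast
      then obtain x h where xh: "p = pr n x h" "x \<in> tuples G n" "h \<in> tuples H n"
        unfolding tuples_split by blast
      with eq p show "p \<in> {pr n x h | x h. x \<in> commuting_tuples G n \<and> h \<in> tuples H n}" by blast
    qed
  next
    show "{pr n x h | x h. x \<in> commuting_tuples G n \<and> h \<in> tuples H n} \<subseteq> commuting_tuples (G \<times>\<times> H) n"
      using eq unfolding commuting_tuples_def[of G] by blast
  qed
qed

lemma orbit_pr:
  assumes G: "group G" and H: "comm_group H"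
    and x: "x \<in> tuples G n" and h: "h \<in> tuples H n"
  shows "conj_orbit (G \<times>\<times> H) n (pr n x h) = (\<lambda>y. pr n y h) ` conj_orbit G n x"
proof
  interpret G: group G by fact
  interpret H: comm_group H by fact
  have hi: "h i \<in> carrier H" if "i < n" for i using h that unfolding tuples_def by auto
  have xi: "x i \<in> carrier G" if "i < n" for i using x that unfolding tuples_def by auto
  have conjH: "k \<otimes>\<^bsub>H\<^esub> h i \<otimes>\<^bsub>H\<^esub> inv\<^bsub>H\<^esub> k = h i" if "k \<in> carrier H" "i < n" for k i
  proof -
    have "k \<otimes>\<^bsub>H\<^esub> h i = h i \<otimes>\<^bsub>H\<^esub> k" by (rule H.m_comm[OF that(1) hi[OF that(2)]])
    then show ?thesis using hi[OF that(2)] that(1) by (simp add: H.m_assoc)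
  qed
  show "conj_orbit (G \<times>\<times> H) n (pr n x h) \<subseteq> (\<lambda>y. pr n y h) ` conj_orbit G n x"
  proof
    fix p assume "p \<in> conj_orbit (G \<times>\<times> H) n (pr n x h)"
    then obtain gk where p: "p \<in> tuples (G \<times>\<times> H) n" and gk: "gk \<in> carrier (G \<times>\<times> H)"
      and eq: "\<forall>i<n. p i = gk \<otimes>\<^bsub>G \<times>\<times> H\<^esub> pr n x h i \<otimes>\<^bsub>G \<times>\<times> H\<^esub> inv\<^bsub>G \<times>\<times> H\<^esub> gk"
      unfolding conj_orbit_def by blast
    obtain g k where gk2: "gk = (g, k)" by force
    with gk have g: "g \<in> carrier G" and k: "k \<in> carrier H" by auto
    have eq2: "p i = (g \<otimes>\<^bsub>G\<^esub> x i \<otimes>\<^bsub>G\<^esub> inv\<^bsub>G\<^esub> g, h i)" if "i < n" for i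
      using eq that g k conjH[OF k that] unfolding gk2 pr_def
      by (simp add: inv_DirProd[OF G H.is_group g k])
    from p obtain y h' where yh: "p = pr n y h'" "y \<in> tuples G n" "h' \<in> tuples H n"
      unfolding tuples_split by blast
    have yi: "y i = g \<otimes>\<^bsub>G\<^esub> x i \<otimes>\<^bsub>G\<^esub> inv\<^bsub>G\<^esub> g \<and> h' i = h i" if "i < n" for i
    proof -
      have "p i = (y i, h' i)" using yh(1) that unfolding pr_def by simp
      then show ?thesis using eq2[OF that] by simp
    qed
    have "h' = h" using yh(3) h unfolding tuples_def
      by (rule PiE_ext) (use yi in auto)
    moreover have "y \<in> conj_orbit G n x"
      unfolding conj_orbit_def using yh(2) g yi by blast
    ultimately have "y \<in> conj_orbit G n x" and "h' = h" by auto
    then show "p \<in> (\<lambda>y. pr n y h) ` conj_orbit G n x" using yh by blast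
  qed
  show "(\<lambda>y. pr n y h) ` conj_orbit G n x \<subseteq> conj_orbit (G \<times>\<times> H) n (pr n x h)"
  proof
    fix p assume "p \<in> (\<lambda>y. pr n y h) ` conj_orbit G n x"
    then obtain y g where p: "p = pr n y h" and y: "y \<in> tuples G n" and g: "g \<in> carrier G"
      and eq: "\<forall>i<n. y i = g \<otimes>\<^bsub>G\<^esub> x i \<otimes>\<^bsub>G\<^esub> inv\<^bsub>G\<^esub> g"
      unfolding conj_orbit_def by blast
    have "\<forall>i<n. p i = (g, \<one>\<^bsub>H\<^esub>) \<otimes>\<^bsub>G \<times>\<times> H\<^esub> pr n x h i \<otimes>\<^bsub>G \<times>\<times> H\<^esub> inv\<^bsub>G \<times>\<times> H\<^esub> (g, \<one>\<^bsub>H\<^esub>)"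
      using eq g hi unfolding p pr_def
      by (simp add: inv_DirProd[OF G H.is_group g H.one_closed])
    moreover have "(g, \<one>\<^bsub>H\<^esub>) \<in> carrier (G \<times>\<times> H)" using g by simp
    moreover have "p \<in> tuples (G \<times>\<times> H) n" using p y h pr_in_tuples by blast
    ultimately show "p \<in> conj_orbit (G \<times>\<times> H) n (pr n x h)" unfolding conj_orbit_def by blast
  qed
qed

lemma card_tuples: "finite (carrier H) \<Longrightarrow> card (tuples H n) = card (carrier H) ^ n"
  unfolding tuples_def by (simp add: card_PiE)

lemma self_in_orbit:
  assumes "group G" "x \<in> tuples G n" shows "x \<in> conj_orbit G n x"
proof -
  interpret G: group G by fact
  have "\<forall>i<n. x i = \<one>\<^bsub>G\<^esub> \<otimes>\<^bsub>G\<^esub> x i \<otimes>\<^bsub>G\<^esub> inv\<^bsub>G\<^esub> \<one>\<^bsub>G\<^esub>"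
    using assms(2) unfolding tuples_def by (auto simp: PiE_iff)
  then show ?thesis using assms(2) unfolding conj_orbit_def by blast
qed

lemma orbit_sub: "conj_orbit G n x \<subseteq> tuples G n" unfolding conj_orbit_def by blast

lemma count_lemma:
  fixes G :: "('a, 'b) monoid_scheme" and H :: "('c, 'd) monoid_scheme"
  assumes G: "group G" and H: "comm_group H" and fH: "finite (carrier H)"
    and S: "S \<subseteq> tuples G n"
  shows "card (conj_orbit (G \<times>\<times> H) n ` {pr n x h | x h. x \<in> S \<and> h \<in> tuples H n})
     = card (conj_orbit G n ` S) * card (carrier H) ^ n"
proof -
  define F where "F = (\<lambda>(Ob :: (nat \<Rightarrow> 'a) set, h :: nat \<Rightarrow> 'c). (\<lambda>y. pr n y h) ` Ob)"
  have img: "conj_orbit (G \<times>\<times> H) n ` {pr n x h | x h. x \<in> S \<and> h \<in> tuples H n}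
      = F ` (conj_orbit G n ` S \<times> tuples H n)"
  proof
    show "conj_orbit (G \<times>\<times> H) n ` {pr n x h | x h. x \<in> S \<and> h \<in> tuples H n}
      \<subseteq> F ` (conj_orbit G n ` S \<times> tuples H n)"
    proof
      fix z assume "z \<in> conj_orbit (G \<times>\<times> H) n ` {pr n x h | x h. x \<in> S \<and> h \<in> tuples H n}"
      then obtain x h where xh: "x \<in> S" "h \<in> tuples H n" and z: "z = conj_orbit (G \<times>\<times> H) n (pr n x h)"
        by blast
      have "z = F (conj_orbit G n x, h)" unfolding z F_def
        using orbit_pr[OF G H _ xh(2)] xh(1) S by auto
      then show "z \<in> F ` (conj_orbit G n ` S \<times> tuples H n)" using xh by blast
    qed
    show "F ` (conj_orbit G n ` S \<times> tuples H n) \<subseteq>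
      conj_orbit (G \<times>\<times> H) n ` {pr n x h | x h. x \<in> S \<and> h \<in> tuples H n}"
    proof
      fix z assume "z \<in> F ` (conj_orbit G n ` S \<times> tuples H n)"
      then obtain x h where xh: "x \<in> S" "h \<in> tuples H n" and z: "z = F (conj_orbit G n x, h)"
        by blast
      have "z = conj_orbit (G \<times>\<times> H) n (pr n x h)" unfolding z F_def
        using orbit_pr[OF G H _ xh(2)] xh(1) S by auto
      then show "z \<in> conj_orbit (G \<times>\<times> H) n ` {pr n x h | x h. x \<in> S \<and> h \<in> tuples H n}"
        using xh by blast
    qed
  qed
  have inj: "inj_on F (conj_orbit G n ` S \<times> tuples H n)"
  proof (rule inj_onI, clarify)
    fix x h x' h' assume x: "x \<in> S" and h: "h \<in> tuples H n" and x': "x' \<in> S" and h': "h' \<in> tuples H n"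
      and eq: "F (conj_orbit G n x, h) = F (conj_orbit G n x', h')"
    have xt: "x \<in> tuples G n" using x S by blast
    have "pr n x h \<in> F (conj_orbit G n x, h)" unfolding F_def using self_in_orbit[OF G xt] by auto
    then have "pr n x h \<in> F (conj_orbit G n x', h')" using eq by simp
    then have "pr n x h \<in> (\<lambda>y. pr n y h') ` conj_orbit G n x'"
      unfolding F_def by simp
    then obtain y where "y \<in> conj_orbit G n x'" "pr n x h = pr n y h'"
      by blast
    then have hh: "h = h'" using pr_inj[OF xt h _ h'] orbit_sub by blast
    have "inj_on (\<lambda>y. pr n y h) (tuples G n)"
      by (rule inj_onI) (use pr_inj h in blast)
    then have "conj_orbit G n x = conj_orbit G n x'"
      using eq hh unfolding F_def by (simp add: inj_on_image_eq_iff[OF _ orbit_sub orbit_sub])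
    then show "conj_orbit G n x = conj_orbit G n x' \<and> h = h'" using hh by blast
  qed
  show ?thesis unfolding img card_image[OF inj] card_cartesian_product card_tuples[OF fH] ..
qed

lemma fps_scale_nth: "(a oo (of_nat c * fps_X)) $ n = (of_nat c)^n * (a $ n :: nat)"
proof -
  have "(of_nat c * fps_X :: nat fps)^i $ n = (if i = n then c^n else 0)" for i
    by (simp add: power_mult_distrib fps_of_nat[symmetric] fps_const_power fps_X_power_iff)
  then show ?thesis by (simp add: fps_compose_nth mult_delta_right sum.delta' mult.commute)
qed

theorem corollary4p6:
  fixes G :: "('a, 'b) monoid_scheme" and H :: "('c, 'd) monoid_scheme"
  assumes "group G" and "finite (carrier G)"
    and "comm_group H" and "finite (carrier H)"
  shows "A_series (G \<times>\<times> H) = A_series G oo (of_nat (card (carrier H)) * fps_X)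
    \<and> B_series (G \<times>\<times> H) = B_series G oo (of_nat (card (carrier H)) * fps_X)"
proof
  have a: "alpha (G \<times>\<times> H) n = card (carrier H) ^ n * alpha G n" for n
  proof -
    have "alpha (G \<times>\<times> H) n = card (conj_orbit G n ` tuples G n) * card (carrier H) ^ n"
      unfolding alpha_def tuples_split[of G H n]
      by (rule count_lemma[OF assms(1,3,4)]) (rule subset_refl)
    then show ?thesis unfolding alpha_def by simp
  qed
  show "A_series (G \<times>\<times> H) = A_series G oo (of_nat (card (carrier H)) * fps_X)"
    unfolding A_series_def fps_eq_iff fps_scale_nth fps_nth_Abs_fps a by simp
  have b: "beta (G \<times>\<times> H) n = card (carrier H) ^ n * beta G n" for n
  proof -
    have "beta (G \<times>\<times> H) n = card (conj_orbit G n ` commuting_tuples G n) * card (carrier H) ^ n"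
      unfolding beta_def commuting_split[OF assms(3), of G n]
      by (rule count_lemma[OF assms(1,3,4)]) (auto simp: commuting_tuples_def)
    then show ?thesis unfolding beta_def by simp
  qed
  show "B_series (G \<times>\<times> H) = B_series G oo (of_nat (card (carrier H)) * fps_X)"
    unfolding B_series_def fps_eq_iff fps_scale_nth fps_nth_Abs_fps b by simp
qed

end
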